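(* Let $A$ be an $\mathbb{R}$-algebra and $B$ an $A$-algebra. If $B$ has the substitution property over $A$ along algebraic formal arcs or along algebraic Puiseux arcs, then $B$ has the weak substitution property on points over $A$.
   Context: $\mathbb{R}[[t]]_{\mathrm{alg}}$ is the ring of formal power series in $t$ algebraic over $\mathbb{R}[t]$; $\mathbb{R}[[t^*]]_{\mathrm{alg}}$ is the ring of Puiseux series $\sum_{i\ge0}a_it^{i/m}$ of non-negative order algebraic over $\mathbb{R}[t]$. $B$ has the substitution property along algebraic formal (resp. Puiseux) arcs if every morphism $A\to\mathbb{R}[[t]]_{\mathrm{alg}}$ (resp. $A\to\mathbb{R}[[t^*]]_{\mathrm{alg}}$) admits one and only one lifting to $B$ (a morphism from $B$ whose composition with the structure map $A\to B$ is the given one). $B$ has the weak substitution property over $A$ if every morphism $A\to\mathbb{R}$ admits one and only one lifting to $B$. *)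

theory Defs
  imports Complex_Main "HOL-Computational_Algebra.Polynomial_FPS"
begin

definition alg_hom_into ::
  "'c set \<Rightarrow> ('c \<Rightarrow> 'c \<Rightarrow> 'c) \<Rightarrow> ('c \<Rightarrow> 'c \<Rightarrow> 'c) \<Rightarrow> (real \<Rightarrow> 'c)
   \<Rightarrow> ('a::{comm_ring_1,real_algebra_1} \<Rightarrow> 'c) \<Rightarrow> bool" where
  "alg_hom_into S pl ml emb h \<longleftrightarrow>
     (\<forall>x. h x \<in> S) \<and> (\<forall>x y. h (x + y) = pl (h x) (h y)) \<and>
     (\<forall>x y. h (x * y) = ml (h x) (h y)) \<and> (\<forall>r. h (of_real r) = emb r)"

definition subst_prop ::
  "'c set \<Rightarrow> ('c \<Rightarrow> 'c \<Rightarrow> 'c) \<Rightarrow> ('c \<Rightarrow> 'c \<Rightarrow> 'c) \<Rightarrow> (real \<Rightarrow> 'c)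
   \<Rightarrow> ('a::{comm_ring_1,real_algebra_1} \<Rightarrow> 'b::{comm_ring_1,real_algebra_1}) \<Rightarrow> bool" where
  "subst_prop S pl ml emb i \<longleftrightarrow>
     (\<forall>h :: 'a \<Rightarrow> 'c. alg_hom_into S pl ml emb h \<longrightarrow>
        (\<exists>!g :: 'b \<Rightarrow> 'c. alg_hom_into S pl ml emb g \<and> g \<circ> i = h))"

definition alg_fps :: "real fps set" where
  "alg_fps = {f. \<exists>P :: real poly poly. P \<noteq> 0 \<and> poly (map_poly fps_of_poly P) f = 0}"

text \<open>Puiseux series as coefficient functions on the rationals: sum_q a(q) t^q.\<close>
definition puiseux :: "(rat \<Rightarrow> real) set" where
  "puiseux = {a. \<exists>m::nat. m > 0 \<and> (\<forall>q. a q \<noteq> 0 \<longrightarrow> q \<ge> 0 \<and> q * of_nat m \<in> \<int>)}"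

definition pz_mul :: "(rat \<Rightarrow> real) \<Rightarrow> (rat \<Rightarrow> real) \<Rightarrow> (rat \<Rightarrow> real)" where
  "pz_mul a b = (\<lambda>q. \<Sum>r\<in>{r. a r \<noteq> 0 \<and> b (q - r) \<noteq> 0}. a r * b (q - r))"

definition pz_add :: "(rat \<Rightarrow> real) \<Rightarrow> (rat \<Rightarrow> real) \<Rightarrow> (rat \<Rightarrow> real)" where
  "pz_add a b = (\<lambda>q. a q + b q)"

definition pz_const :: "real \<Rightarrow> (rat \<Rightarrow> real)" where
  "pz_const c = (\<lambda>q. if q = 0 then c else 0)"

definition pz_pow :: "(rat \<Rightarrow> real) \<Rightarrow> nat \<Rightarrow> (rat \<Rightarrow> real)" where
  "pz_pow a n = ((pz_mul a) ^^ n) (pz_const 1)"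

definition pz_of_poly :: "real poly \<Rightarrow> (rat \<Rightarrow> real)" where
  "pz_of_poly p = (\<lambda>q. if q \<in> \<nat> then coeff p (nat \<lfloor>q\<rfloor>) else 0)"

definition alg_puiseux :: "(rat \<Rightarrow> real) set" where
  "alg_puiseux = {a \<in> puiseux. \<exists>P :: real poly poly. P \<noteq> 0 \<and>
      (\<forall>q. (\<Sum>i\<le>degree P. pz_mul (pz_of_poly (coeff P i)) (pz_pow a i) q) = 0)}"

definition subst_formal_arcs ::
  "('a::{comm_ring_1,real_algebra_1} \<Rightarrow> 'b::{comm_ring_1,real_algebra_1}) \<Rightarrow> bool" where
  "subst_formal_arcs i \<longleftrightarrow> subst_prop alg_fps (+) (*) fps_const i"

definition subst_puiseux_arcs ::
  "('a::{comm_ring_1,real_algebra_1} \<Rightarrow> 'b::{comm_ring_1,real_algebra_1}) \<Rightarrow> bool" where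
  "subst_puiseux_arcs i \<longleftrightarrow> subst_prop alg_puiseux pz_add pz_mul pz_const i"

definition weak_subst ::
  "('a::{comm_ring_1,real_algebra_1} \<Rightarrow> 'b::{comm_ring_1,real_algebra_1}) \<Rightarrow> bool" where
  "weak_subst i \<longleftrightarrow> subst_prop (UNIV :: real set) (+) (*) (\<lambda>r. r) i"

end

theory Submission
  imports Defs
begin

lemma generic_weak:
  fixes i :: "'a::{comm_ring_1,real_algebra_1} \<Rightarrow> 'b::{comm_ring_1,real_algebra_1}"
    and S :: "'c set"
  assumes sp: "subst_prop S pl ml emb i"
    and emb_in: "\<And>r. emb r \<in> S"
    and emb_add: "\<And>a b. emb (a + b) = pl (emb a) (emb b)"
    and emb_mul: "\<And>a b. emb (a * b) = ml (emb a) (emb b)"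
    and ev_add: "\<And>x y. x \<in> S \<Longrightarrow> y \<in> S \<Longrightarrow> ev (pl x y) = ev x + ev y"
    and ev_mul: "\<And>x y. x \<in> S \<Longrightarrow> y \<in> S \<Longrightarrow> ev (ml x y) = ev x * ev y"
    and ev_emb: "\<And>r. ev (emb r) = (r::real)"
  shows "weak_subst i"
  unfolding weak_subst_def subst_prop_def
proof (intro allI impI)
  fix h :: "'a \<Rightarrow> real" assume h: "alg_hom_into UNIV (+) (*) (\<lambda>r. r) h"
  have "alg_hom_into S pl ml emb (emb \<circ> h)"
    using h emb_in emb_add emb_mul by (auto simp: alg_hom_into_def)
  then obtain g :: "'b \<Rightarrow> 'c" where g: "alg_hom_into S pl ml emb g" "g \<circ> i = emb \<circ> h"
    and uniq: "\<And>g'. alg_hom_into S pl ml emb g' \<Longrightarrow> g' \<circ> i = emb \<circ> h \<Longrightarrow> g' = g"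
    using sp unfolding subst_prop_def by metis
  show "\<exists>!k. alg_hom_into UNIV (+) (*) (\<lambda>r. r) k \<and> k \<circ> i = h"
  proof (rule ex1I[of _ "ev \<circ> g"])
    have "ev (g (i a)) = h a" for a
      using g(2) ev_emb by (metis comp_apply)
    then show "alg_hom_into UNIV (+) (*) (\<lambda>r. r) (ev \<circ> g) \<and> (ev \<circ> g) \<circ> i = h"
      using g(1) ev_add ev_mul ev_emb by (auto simp: alg_hom_into_def)
  next
    fix k assume k: "alg_hom_into UNIV (+) (*) (\<lambda>r. r) k \<and> k \<circ> i = h"
    have "alg_hom_into S pl ml emb (emb \<circ> k)"
      using k emb_in emb_add emb_mul by (auto simp: alg_hom_into_def)
    moreover have "(emb \<circ> k) \<circ> i = emb \<circ> h" using k by auto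
    ultimately have "emb \<circ> k = g" by (rule uniq)
    then show "k = ev \<circ> g" using ev_emb by (metis comp_apply fun_eq_iff)
  qed
qed

lemma fps_const_alg: "fps_const c \<in> alg_fps"
  unfolding alg_fps_def
  by (rule CollectI, rule exI[of _ "[:-[:c:], 1:]"]) (simp add: map_poly_pCons fps_of_poly_const)

lemma pz_mul_const_left: "pz_mul (pz_const c) b = (\<lambda>q. c * b q)"
proof
  fix q
  show "pz_mul (pz_const c) b q = c * b q"
  proof (cases "c = 0 \<or> b q = 0")
    case True
    have E: "{r. pz_const c r \<noteq> 0 \<and> b (q - r) \<noteq> 0} = {}"
      using True by (auto simp: pz_const_def)
    show ?thesis unfolding pz_mul_def E using True by auto
  next
    case False
    then have "{r. pz_const c r \<noteq> 0 \<and> b (q - r) \<noteq> 0} = {0}"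
      by (auto simp: pz_const_def split: if_splits)
    then show ?thesis by (simp add: pz_mul_def pz_const_def)
  qed
qed

lemma pz_mul_const_right: "pz_mul a (pz_const c) = (\<lambda>q. a q * c)"
proof
  fix q
  show "pz_mul a (pz_const c) q = a q * c"
  proof (cases "c = 0 \<or> a q = 0")
    case True
    have E: "{r. a r \<noteq> 0 \<and> pz_const c (q - r) \<noteq> 0} = {}"
      using True by (auto simp: pz_const_def)
    show ?thesis unfolding pz_mul_def E using True by auto
  next
    case False
    then have "{r. a r \<noteq> 0 \<and> pz_const c (q - r) \<noteq> 0} = {q}"
      by (auto simp: pz_const_def split: if_splits)
    then show ?thesis by (simp add: pz_mul_def pz_const_def)
  qed
qed

lemma pz_of_poly_const: "pz_of_poly [:d:] = pz_const d"
proof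
  fix q
  show "pz_of_poly [:d:] q = pz_const d q"
  proof (cases "q \<in> \<nat>")
    case True
    then obtain n where n: "q = of_nat n" by (auto elim: Nats_cases)
    then show ?thesis by (simp add: pz_of_poly_def pz_const_def coeff_pCons split: nat.split)
  next
    case False
    then have "q \<noteq> 0" by auto
    then show ?thesis using False by (simp add: pz_of_poly_def pz_const_def)
  qed
qed

lemma pz_const_alg: "pz_const c \<in> alg_puiseux"
proof -
  have "pz_const c \<in> puiseux"
    unfolding puiseux_def by (rule CollectI, rule exI[of _ 1]) (auto simp: pz_const_def)
  moreover have "\<forall>q. (\<Sum>i\<le>degree [:-[:c:], 1:]. pz_mul (pz_of_poly (coeff [:-[:c:], 1:] i))
      (pz_pow (pz_const c) i) q) = 0"
  proof
    fix q
    have "pz_of_poly 1 = pz_const 1" using pz_of_poly_const[of 1] by (simp add: pCons_one)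
    then show "(\<Sum>i\<le>degree [:-[:c:], 1:]. pz_mul (pz_of_poly (coeff [:-[:c:], 1:] i))
      (pz_pow (pz_const c) i) q) = 0"
      by (simp add: pz_pow_def pz_mul_const_left pz_mul_const_right pz_of_poly_const)
         (simp add: pz_const_def)
  qed
  ultimately show ?thesis unfolding alg_puiseux_def
    by (intro CollectI conjI exI[of _ "[:-[:c:], 1:]"]) auto
qed

lemma pz_mul_0:
  assumes "a \<in> puiseux" "b \<in> puiseux"
  shows "pz_mul a b 0 = a 0 * b 0"
proof (cases "a 0 = 0 \<or> b 0 = 0")
  case True
  have "{r. a r \<noteq> 0 \<and> b (0 - r) \<noteq> 0} \<subseteq> {0}"
    using assms by (auto simp: puiseux_def) (metis neg_0_le_iff_le order_antisym)
  then have E: "{r. a r \<noteq> 0 \<and> b (0 - r) \<noteq> 0} = {}" using True by auto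
  show ?thesis unfolding pz_mul_def E using True by auto
next
  case False
  have "{r. a r \<noteq> 0 \<and> b (0 - r) \<noteq> 0} \<subseteq> {0}"
    using assms by (auto simp: puiseux_def) (metis neg_0_le_iff_le order_antisym)
  then have "{r. a r \<noteq> 0 \<and> b (0 - r) \<noteq> 0} = {0}" using False by auto
  then show ?thesis by (simp add: pz_mul_def)
qed

theorem proposition3p3:
  fixes i :: "'a::{comm_ring_1,real_algebra_1} \<Rightarrow> 'b::{comm_ring_1,real_algebra_1}"
  assumes "alg_hom_into UNIV (+) (*) of_real i"
    and "subst_formal_arcs i \<or> subst_puiseux_arcs i"
  shows "weak_subst i"
  using assms(2)
proof
  assume "subst_formal_arcs i"
  then show ?thesis unfolding subst_formal_arcs_def
    by (rule generic_weak[where ev = "\<lambda>f. fps_nth f 0"])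
      (auto simp: fps_const_alg fps_const_add fps_const_mult)
next
  assume "subst_puiseux_arcs i"
  then show ?thesis unfolding subst_puiseux_arcs_def
  proof (rule generic_weak[where ev = "\<lambda>f. f 0"])
    show "pz_const (a * b) = pz_mul (pz_const a) (pz_const b)" for a b
      unfolding pz_mul_const_left by (simp add: pz_const_def fun_eq_iff)
    show "pz_mul x y 0 = x 0 * y 0" if "x \<in> alg_puiseux" "y \<in> alg_puiseux" for x y
      using that by (intro pz_mul_0) (auto simp: alg_puiseux_def)
  qed (simp_all add: pz_const_alg, auto simp: pz_add_def pz_const_def fun_eq_iff)
qed

end
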